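(* In the setting of the context: (i) if $A$ is any frontier, then $\sum_{\mathbf{w}\in A}\Pr_{\theta,\phi}(\mathbf{w}\mid\mathbf{z}_{\mathrm{pre}})=1$. (ii) Run top-$k$ constrained beam search ($k$-CBS) with beam width $B$; let $F$ be the set of continuations $\mathbf{x}$ of the output pairs $(\mathbf{z}_{\mathrm{pre}}\Vert\mathbf{x},\ell)\in C_T$, and let $R_{\mathrm{prune}}$ be the set of partial continuations $\mathbf{u}$ (of lengths $t<T$) such that a pair $(\mathbf{z}_{\mathrm{pre}}\Vert\mathbf{u},\ell)$ was in $C_t$ but was removed at step $t$ (either because its history ends in EOS or because it was not among the $B$ retained pairs). Then $F\cup R_{\mathrm{prune}}$ is a frontier, and $$\sum_{\mathbf{x}\in F}\Pr_{\theta,\phi}(\mathbf{x}\mid\mathbf{z}_{\mathrm{pre}})+\sum_{\mathbf{u}\in R_{\mathrm{prune}}}\Pr_{\theta,\phi}(\mathbf{u}\mid\mathbf{z}_{\mathrm{pre}})=1.$$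
   Context: Let $\mathbb{V}$ be a finite vocabulary containing a designated end-of-sequence token EOS. A language model $\theta$ assigns to every finite token sequence (history) $\mathbf{h}$ a probability distribution $\Pr_\theta(\cdot\mid\mathbf{h})$ on $\mathbb{V}$ with $\Pr_\theta(v\mid\mathbf{h})>0$ for all $v$. For an integer $k\ge1$ and a history $\mathbf{h}$, let $S(\mathbf{h})\subseteq\mathbb{V}$ be the set of $k$ tokens with the largest values of $\Pr_\theta(\cdot\mid\mathbf{h})$ (ties broken by a fixed deterministic rule). The top-$k$ decoding distribution is $\Pr_{\theta,\phi}(v\mid\mathbf{h})=\Pr_\theta(v\mid\mathbf{h})/\sum_{u\in S(\mathbf{h})}\Pr_\theta(u\mid\mathbf{h})$ for $v\in S(\mathbf{h})$ and $0$ otherwise. Fix a prefix $\mathbf{z}_{\mathrm{pre}}$ and $T\ge1$. For a partial continuation $\mathbf{u}=(u_1,\dots,u_t)$, $0\le t\le T$, $\Pr_{\theta,\phi}(\mathbf{u}\mid\mathbf{z}_{\mathrm{pre}})=\prod_{s=1}^t\Pr_{\theta,\phi}(u_s\mid\mathbf{z}_{\mathrm{pre}}\Vert u_{1:s-1})$ ($\Vert$ is concatenation). Call $\mathbf{u}$ a node of the top-$k$ tree if $u_s\in S(\mathbf{z}_{\mathrm{pre}}\Vert u_{1:s-1})$ for all $s\le t$. A frontier is a set $A$ of nodes (of lengths at most $T$) such that no element of $A$ is a proper initial segment of another element of $A$, and every node of length $T$ has exactly one element of $A$ as an initial segment. $k$-CBS with beam width $B$: set $L_0=\{(\mathbf{z}_{\mathrm{pre}},0)\}$.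 For $t=1,\dots,T$: let $C_t=\{(\mathbf{h}\Vert v,\ \ell+\log\Pr_{\theta,\phi}(v\mid\mathbf{h})):(\mathbf{h},\ell)\in L_{t-1},\ v\in S(\mathbf{h})\}$. If $t=T$, output $C_T$. If $t<T$, delete from $C_t$ every pair whose history ends in EOS, and let $L_t$ be the (at most) $B$ pairs of $C_t$ with the largest second coordinate (deterministic tie-breaking). *)

theory Defs
  imports Complex_Main "HOL-Library.Sublist"
begin

text \<open>Language model: P h v is Pr_theta(v | h). S h is the top-k set at history h.\<close>

definition valid_lm :: "('v::finite list \<Rightarrow> 'v \<Rightarrow> real) \<Rightarrow> bool" where
  "valid_lm P \<longleftrightarrow> (\<forall>h v. P h v > 0) \<and> (\<forall>h. (\<Sum>v\<in>UNIV. P h v) = 1)"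

definition topk_sets :: "nat \<Rightarrow> ('v::finite list \<Rightarrow> 'v \<Rightarrow> real) \<Rightarrow> ('v list \<Rightarrow> 'v set) \<Rightarrow> bool" where
  "topk_sets k P S \<longleftrightarrow> (\<forall>h. card (S h) = k \<and>
      (\<forall>u\<in>S h. \<forall>v. v \<notin> S h \<longrightarrow> P h v \<le> P h u))"

definition topk_prob :: "('v list \<Rightarrow> 'v \<Rightarrow> real) \<Rightarrow> ('v list \<Rightarrow> 'v set) \<Rightarrow> 'v list \<Rightarrow> 'v \<Rightarrow> real" where
  "topk_prob P S h v = (if v \<in> S h then P h v / (\<Sum>u\<in>S h. P h u) else 0)"

definition seq_prob :: "('v list \<Rightarrow> 'v \<Rightarrow> real) \<Rightarrow> ('v list \<Rightarrow> 'v set) \<Rightarrow> 'v list \<Rightarrow> 'v list \<Rightarrow> real" where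
  "seq_prob P S zpre u = (\<Prod>s<length u. topk_prob P S (zpre @ take s u) (u ! s))"

definition is_node :: "('v list \<Rightarrow> 'v set) \<Rightarrow> 'v list \<Rightarrow> 'v list \<Rightarrow> bool" where
  "is_node S zpre u \<longleftrightarrow> (\<forall>s<length u. u ! s \<in> S (zpre @ take s u))"

definition frontier :: "('v list \<Rightarrow> 'v set) \<Rightarrow> 'v list \<Rightarrow> nat \<Rightarrow> 'v list set \<Rightarrow> bool" where
  "frontier S zpre T A \<longleftrightarrow>
     (\<forall>a\<in>A. is_node S zpre a \<and> length a \<le> T) \<and>
     (\<forall>a\<in>A. \<forall>b\<in>A. \<not> strict_prefix a b) \<and>
     (\<forall>w. is_node S zpre w \<and> length w = T \<longrightarrow> (\<exists>!a. a \<in> A \<and> prefix a w))"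

definition cbs_expand :: "('v list \<Rightarrow> 'v \<Rightarrow> real) \<Rightarrow> ('v list \<Rightarrow> 'v set) \<Rightarrow>
    ('v list \<times> real) set \<Rightarrow> ('v list \<times> real) set" where
  "cbs_expand P S L = {(h @ [v], l + ln (topk_prob P S h v)) | h l v. (h, l) \<in> L \<and> v \<in> S h}"

definition top_B :: "nat \<Rightarrow> ('a \<times> real) set \<Rightarrow> ('a \<times> real) set \<Rightarrow> bool" where
  "top_B B X Y \<longleftrightarrow> Y \<subseteq> X \<and> card Y = min B (card X) \<and>
     (\<forall>p\<in>Y. \<forall>q\<in>X - Y. snd q \<le> snd p)"

definition kcbs_run :: "('v list \<Rightarrow> 'v \<Rightarrow> real) \<Rightarrow> ('v list \<Rightarrow> 'v set) \<Rightarrow> 'v \<Rightarrow> nat \<Rightarrow> nat \<Rightarrow>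
    'v list \<Rightarrow> (nat \<Rightarrow> ('v list \<times> real) set) \<Rightarrow> (nat \<Rightarrow> ('v list \<times> real) set) \<Rightarrow> bool" where
  "kcbs_run P S EOS B T zpre L C \<longleftrightarrow>
     L 0 = {(zpre, 0)} \<and>
     (\<forall>t\<in>{1..T}. C t = cbs_expand P S (L (t - 1))) \<and>
     (\<forall>t\<in>{1..<T}. top_B B {p \<in> C t. last (fst p) \<noteq> EOS} (L t))"

end

theory Submission
  imports Defs
begin

definition lval :: "('v list \<Rightarrow> 'v \<Rightarrow> real) \<Rightarrow> ('v list \<Rightarrow> 'v set) \<Rightarrow> 'v list \<Rightarrow> 'v list \<Rightarrow> real" where
  "lval P S zpre x = (\<Sum>s<length x. ln (topk_prob P S (zpre @ take s x) (x ! s)))"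

lemma lval_Nil[simp]: "lval P S zpre [] = 0" by (simp add: lval_def)

lemma lval_snoc: "lval P S zpre (x @ [v]) = lval P S zpre x + ln (topk_prob P S (zpre @ x) v)"
proof -
  have "(\<Sum>s<length x. ln (topk_prob P S (zpre @ take s (x@[v])) ((x@[v]) ! s))) = (\<Sum>s<length x. ln (topk_prob P S (zpre @ take s x) (x ! s)))"
    by (rule sum.cong) (auto simp: nth_append)
  then show ?thesis unfolding lval_def by simp
qed

lemma seq_prob_Nil[simp]: "seq_prob P S zpre [] = 1" by (simp add: seq_prob_def)

lemma seq_prob_snoc: "seq_prob P S zpre (x @ [v]) = seq_prob P S zpre x * topk_prob P S (zpre @ x) v"
proof -
  have "(\<Prod>s<length x. topk_prob P S (zpre @ take s (x@[v])) ((x@[v]) ! s)) = (\<Prod>s<length x. topk_prob P S (zpre @ take s x) (x ! s))"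
    by (rule prod.cong) (auto simp: nth_append)
  then show ?thesis unfolding seq_prob_def by simp
qed

lemma node_snoc: "is_node S zpre (x @ [v]) \<longleftrightarrow> is_node S zpre x \<and> v \<in> S (zpre @ x)"
  unfolding is_node_def
  by (auto simp: nth_append less_Suc_eq)

lemma node_take: "is_node S zpre w \<Longrightarrow> is_node S zpre (take n w)"
  unfolding is_node_def by (auto simp: min_def)

lemma nonnode_zero: "\<not> is_node S zpre x \<Longrightarrow> seq_prob P S zpre x = 0"
  unfolding is_node_def seq_prob_def
  by (auto intro!: prod_zero simp: topk_prob_def)

lemma sum_topk:
  assumes lm: "valid_lm P" and k: "1 \<le> k" and S: "topk_sets k P S"
  shows "(\<Sum>v\<in>UNIV. topk_prob P S h v) = 1"
proof -
  have c: "card (S h) = k" using S unfolding topk_sets_def by blast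
  hence ne: "S h \<noteq> {}" using k by auto
  have pos: "(\<Sum>u\<in>S h. P h u) > 0"
    using lm ne by (intro sum_pos) (auto simp: valid_lm_def)
  have "(\<Sum>v\<in>UNIV. topk_prob P S h v) = (\<Sum>v\<in>UNIV \<inter> S h. P h v / (\<Sum>u\<in>S h. P h u))"
    unfolding topk_prob_def by (subst sum.inter_restrict) auto
  also have "\<dots> = 1" using pos by (simp add: sum_divide_distrib[symmetric])
  finally show ?thesis .
qed

lemma ext_sum:
  assumes lm: "valid_lm P" and k: "1 \<le> k" and S: "topk_sets k P S"
  shows "(\<Sum>w\<in>{w. length w = n}. seq_prob P S zpre (a @ w)) = seq_prob P S zpre a"
proof (induction n arbitrary: a)
  case 0
  then show ?case by simp
next
  case (Suc n)
  have eq: "{w::'a list. length w = Suc n} = (\<lambda>(xs, n). n#xs) ` ({w. length w = n} \<times> UNIV)"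
    using lists_length_Suc_eq[of UNIV n] by simp
  have fin: "finite {w::'a list. length w = n}"
    using finite_lists_length_eq[of "UNIV::'a set" n] by simp
  have "(\<Sum>w\<in>{w. length w = Suc n}. seq_prob P S zpre (a @ w))
      = (\<Sum>p\<in>{w. length w = n} \<times> UNIV. seq_prob P S zpre (a @ (snd p # fst p)))"
    unfolding eq by (subst sum.reindex) (auto simp: inj_split_Cons intro!: sum.cong)
  also have "\<dots> = (\<Sum>w\<in>{w. length w = n}. \<Sum>v\<in>UNIV. seq_prob P S zpre ((a @ [v]) @ w))"
    by (simp add: sum.cartesian_product case_prod_beta)
  also have "\<dots> = (\<Sum>v\<in>UNIV. \<Sum>w\<in>{w. length w = n}. seq_prob P S zpre ((a @ [v]) @ w))"
    by (rule sum.swap)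
  also have "\<dots> = (\<Sum>v\<in>UNIV. seq_prob P S zpre a * topk_prob P S (zpre @ a) v)"
  proof (rule sum.cong[OF refl])
    fix v show "(\<Sum>w\<in>{w. length w = n}. seq_prob P S zpre ((a @ [v]) @ w)) = seq_prob P S zpre a * topk_prob P S (zpre @ a) v"
      using Suc.IH[of "a @ [v]"] by (simp add: seq_prob_snoc)
  qed
  also have "\<dots> = seq_prob P S zpre a"
    using sum_topk[OF lm k S] by (simp add: sum_distrib_left[symmetric])
  finally show ?case .
qed

lemma frontier_sum:
  assumes lm: "valid_lm P" and k: "1 \<le> k" and S: "topk_sets k P S"
    and A: "frontier S zpre T A"
  shows "(\<Sum>w\<in>A. seq_prob P S zpre w) = 1"
proof -
  have A1: "\<And>a. a \<in> A \<Longrightarrow> is_node S zpre a \<and> length a \<le> T"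
   and A2: "\<And>a b. a \<in> A \<Longrightarrow> b \<in> A \<Longrightarrow> \<not> strict_prefix a b"
   and A3: "\<And>w. is_node S zpre w \<Longrightarrow> length w = T \<Longrightarrow> \<exists>!a. a \<in> A \<and> prefix a w"
    using A unfolding frontier_def by blast+
  have finL: "finite {w::'a list. length w = T}"
    using finite_lists_length_eq[of "UNIV::'a set" T] by simp
  have finA: "finite A"
    by (rule finite_subset[OF _ finite_lists_length_le[of "UNIV::'a set" T]]) (auto dest: A1)
  define E where "E a = {x. length x = T \<and> prefix a x}" for a :: "'a list"
  have E_eq: "E a = (\<lambda>w. a @ w) ` {w. length w = T - length a}" if "length a \<le> T" for a
    using that unfolding E_def prefix_def by auto
  have finE: "finite (E a)" for a
    by (rule finite_subset[OF _ finL]) (auto simp: E_def)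
  have "(\<Sum>w\<in>A. seq_prob P S zpre w) = (\<Sum>a\<in>A. \<Sum>x\<in>E a. seq_prob P S zpre x)"
  proof (rule sum.cong)
    fix a assume "a \<in> A"
    hence "length a \<le> T" using A1 by blast
    then show "seq_prob P S zpre a = (\<Sum>x\<in>E a. seq_prob P S zpre x)"
      using ext_sum[OF lm k S, where n="T - length a" and zpre=zpre and a=a]
      by (simp add: E_eq sum.reindex inj_on_def)
  qed simp
  also have "\<dots> = (\<Sum>x\<in>(\<Union>a\<in>A. E a). seq_prob P S zpre x)"
  proof (rule sum.UNION_disjoint[symmetric])
    show "\<forall>a\<in>A. \<forall>b\<in>A. a \<noteq> b \<longrightarrow> E a \<inter> E b = {}"
    proof (intro ballI impI)
      fix a b assume ab: "a \<in> A" "b \<in> A" "a \<noteq> b"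
      show "E a \<inter> E b = {}"
      proof (rule ccontr)
        assume "E a \<inter> E b \<noteq> {}"
        then obtain x where "prefix a x" "prefix b x" unfolding E_def by auto
        hence "prefix a b \<or> prefix b a" using prefix_same_cases by blast
        hence "strict_prefix a b \<or> strict_prefix b a" using ab(3) by auto
        then show False using A2 ab by blast
      qed
    qed
  qed (auto simp: finA finE)
  also have "\<dots> = (\<Sum>x\<in>{w. length w = T}. seq_prob P S zpre x)"
  proof (rule sum.mono_neutral_left[OF finL])
    show "(\<Union>a\<in>A. E a) \<subseteq> {w. length w = T}" by (auto simp: E_def)
    show "\<forall>x\<in>{w. length w = T} - (\<Union>a\<in>A. E a). seq_prob P S zpre x = 0"
    proof
      fix x assume x: "x \<in> {w. length w = T} - (\<Union>a\<in>A. E a)"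
      have "\<not> is_node S zpre x"
      proof
        assume "is_node S zpre x"
        then obtain a where "a \<in> A" "prefix a x" using A3 x by blast
        then show False using x by (auto simp: E_def)
      qed
      then show "seq_prob P S zpre x = 0" by (rule nonnode_zero)
    qed
  qed
  also have "\<dots> = 1" using ext_sum[OF lm k S, where n=T and zpre=zpre and a="[]"] by simp
  finally show ?thesis .
qed


lemma run_facts:
  assumes "kcbs_run P S EOS B T zpre L C"
  shows "L 0 = {(zpre, 0)}" "\<And>t. 1 \<le> t \<Longrightarrow> t \<le> T \<Longrightarrow> C t = cbs_expand P S (L (t - 1))"
    "\<And>t. 1 \<le> t \<Longrightarrow> t < T \<Longrightarrow> L t \<subseteq> C t"
proof -
  show "L 0 = {(zpre, 0)}" using assms unfolding kcbs_run_def by blast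
  have a2: "\<forall>t\<in>{1..T}. C t = cbs_expand P S (L (t - 1))" and
    a3: "\<forall>t\<in>{1..<T}. top_B B {p \<in> C t. last (fst p) \<noteq> EOS} (L t)"
    using assms unfolding kcbs_run_def by blast+
  show "\<And>t. 1 \<le> t \<Longrightarrow> t \<le> T \<Longrightarrow> C t = cbs_expand P S (L (t - 1))"
    using a2 by simp
  fix t assume t: "1 \<le> t" "t < T"
  then have "top_B B {p \<in> C t. last (fst p) \<noteq> EOS} (L t)"
    using a3 by simp
  then show "L t \<subseteq> C t" unfolding top_B_def by blast
qed

lemma inv_L:
  assumes run: "kcbs_run P S EOS B T zpre L C"
  shows "t < T \<Longrightarrow> (h, l) \<in> L t \<Longrightarrow> \<exists>x. h = zpre @ x \<and> length x = t \<and> is_node S zpre x \<and> l = lval P S zpre x"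
proof (induction t arbitrary: h l)
  case 0
  then show ?case using run_facts(1)[OF run] by (auto simp: is_node_def)
next
  case (Suc t)
  have "(h, l) \<in> C (Suc t)" using run_facts(3)[OF run, of "Suc t"] Suc.prems by auto
  then have "(h, l) \<in> cbs_expand P S (L t)" using run_facts(2)[OF run, of "Suc t"] Suc.prems by auto
  then obtain h' l' v where hl: "h = h' @ [v]" "l = l' + ln (topk_prob P S h' v)" "(h', l') \<in> L t" "v \<in> S h'"
    unfolding cbs_expand_def by blast
  then obtain x where x: "h' = zpre @ x" "length x = t" "is_node S zpre x" "l' = lval P S zpre x"
    using Suc.IH Suc.prems by fastforce
  show ?case
    by (rule exI[of _ "x @ [v]"]) (use hl x in \<open>auto simp: node_snoc lval_snoc\<close>)
qed

lemma inv_C: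
  assumes run: "kcbs_run P S EOS B T zpre L C"
    and t: "1 \<le> t" "t \<le> T" and hl: "(zpre @ x, l) \<in> C t"
  shows "length x = t \<and> is_node S zpre x \<and> l = lval P S zpre x \<and>
     (zpre @ butlast x, lval P S zpre (butlast x)) \<in> L (t - 1)"
proof -
  have "(zpre @ x, l) \<in> cbs_expand P S (L (t - 1))" using run_facts(2)[OF run t] hl by auto
  then obtain h' l' v where hl': "zpre @ x = h' @ [v]" "l = l' + ln (topk_prob P S h' v)" "(h', l') \<in> L (t - 1)" "v \<in> S h'"
    unfolding cbs_expand_def by blast
  have "t - 1 < T" using t by simp
  then obtain y where y: "h' = zpre @ y" "length y = t - 1" "is_node S zpre y" "l' = lval P S zpre y"
    using inv_L[OF run _ hl'(3)] by blast
  have "x = y @ [v]" using hl'(1) y(1) by simp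
  then show ?thesis using hl' y t by (auto simp: node_snoc lval_snoc)
qed

lemma inv_C_intro:
  assumes run: "kcbs_run P S EOS B T zpre L C"
    and t: "t < T" and m: "(zpre @ x, lval P S zpre x) \<in> L t" and v: "v \<in> S (zpre @ x)"
  shows "(zpre @ (x @ [v]), lval P S zpre (x @ [v])) \<in> C (Suc t)"
proof -
  have "(zpre @ (x @ [v]), lval P S zpre (x @ [v])) \<in> cbs_expand P S (L t)"
  proof -
    have e: "(zpre @ (x @ [v]), lval P S zpre (x @ [v])) = ((zpre @ x) @ [v], lval P S zpre x + ln (topk_prob P S (zpre @ x) v))"
      by (simp add: lval_snoc)
    show ?thesis unfolding e cbs_expand_def using m v by blast
  qed
  then show ?thesis using run_facts(2)[OF run, of "Suc t"] t by auto
qed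

lemma L_prefix_closed:
  assumes run: "kcbs_run P S EOS B T zpre L C"
  shows "t < T \<Longrightarrow> s \<le> t \<Longrightarrow> (zpre @ x, lval P S zpre x) \<in> L t \<Longrightarrow>
     (zpre @ take s x, lval P S zpre (take s x)) \<in> L s"
proof (induction t arbitrary: x)
  case 0
  have "x = []" using inv_L[OF run 0(1) 0(3)] by auto
  then show ?case using 0 by simp
next
  case (Suc t)
  have lx: "length x = Suc t" using inv_L[OF run Suc.prems(1) Suc.prems(3)] by auto
  show ?case
  proof (cases "s = Suc t")
    case True
    then show ?thesis using lx Suc.prems by simp
  next
    case False
    have cx: "(zpre @ x, lval P S zpre x) \<in> C (Suc t)"
      using run_facts(3)[OF run, of "Suc t"] Suc.prems by auto
    have m: "(zpre @ butlast x, lval P S zpre (butlast x)) \<in> L t"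
      using inv_C[OF run _ _ cx] Suc.prems by simp
    have t1: "t < T" using Suc.prems by simp
    have t2: "s \<le> t" using Suc.prems False by simp
    have "(zpre @ take s (butlast x), lval P S zpre (take s (butlast x))) \<in> L s"
      by (rule Suc.IH[OF t1 t2 m])
    then show ?thesis using False Suc.prems lx by (simp add: take_butlast)
  qed
qed


theorem lemma5:
  fixes P :: "'v::finite list \<Rightarrow> 'v \<Rightarrow> real"
    and S :: "'v list \<Rightarrow> 'v set"
    and EOS :: 'v
    and k B T :: nat
    and zpre :: "'v list"
    and L C :: "nat \<Rightarrow> ('v list \<times> real) set"
  assumes lm: "valid_lm P"
    and k: "1 \<le> k" "k \<le> card (UNIV :: 'v set)"
    and S: "topk_sets k P S"
    and T: "1 \<le> T"
    and run: "kcbs_run P S EOS B T zpre L C"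
  shows "(\<forall>A. frontier S zpre T A \<longrightarrow> (\<Sum>w\<in>A. seq_prob P S zpre w) = 1)
       \<and> (let F = {x. \<exists>l. (zpre @ x, l) \<in> C T};
              R = {u. \<exists>t\<in>{1..<T}. \<exists>l. (zpre @ u, l) \<in> C t \<and> (zpre @ u, l) \<notin> L t}
          in frontier S zpre T (F \<union> R) \<and>
             (\<Sum>x\<in>F. seq_prob P S zpre x) + (\<Sum>u\<in>R. seq_prob P S zpre u) = 1)"
proof -
  have part1: "\<forall>A. frontier S zpre T A \<longrightarrow> (\<Sum>w\<in>A. seq_prob P S zpre w) = 1"
    using frontier_sum[OF lm k(1) S] by blast
  define F where "F = {x. \<exists>l. (zpre @ x, l) \<in> C T}"
  define R where "R = {u. \<exists>t\<in>{1..<T}. \<exists>l. (zpre @ u, l) \<in> C t \<and> (zpre @ u, l) \<notin> L t}"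
  let ?lv = "lval P S zpre"
  have Fc: "x \<in> F \<longleftrightarrow> length x = T \<and> is_node S zpre x \<and> (zpre @ x, ?lv x) \<in> C T" for x
    unfolding F_def using inv_C[OF run T order.refl, of x] by blast
  have Rc: "u \<in> R \<longleftrightarrow> 1 \<le> length u \<and> length u < T \<and> is_node S zpre u \<and>
      (zpre @ u, ?lv u) \<in> C (length u) \<and> (zpre @ u, ?lv u) \<notin> L (length u)" for u
  proof
    assume "u \<in> R"
    then obtain t l where tl: "t \<in> {1..<T}" "(zpre @ u, l) \<in> C t" "(zpre @ u, l) \<notin> L t"
      unfolding R_def by blast
    then show "1 \<le> length u \<and> length u < T \<and> is_node S zpre u \<and>
      (zpre @ u, ?lv u) \<in> C (length u) \<and> (zpre @ u, ?lv u) \<notin> L (length u)"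
      using inv_C[OF run, of t u l] by auto
  next
    assume "1 \<le> length u \<and> length u < T \<and> is_node S zpre u \<and>
      (zpre @ u, ?lv u) \<in> C (length u) \<and> (zpre @ u, ?lv u) \<notin> L (length u)"
    then show "u \<in> R" unfolding R_def by auto
  qed
  have nsp: "\<not> strict_prefix a b" if a: "a \<in> F \<union> R" and b: "b \<in> F \<union> R" for a b
  proof
    assume sp: "strict_prefix a b"
    then have la: "length a < length b" by (rule prefix_length_less)
    have lb: "length b \<le> T" "1 \<le> length b" "(zpre @ b, ?lv b) \<in> C (length b)"
      using b Fc Rc T by auto
    have "a \<in> R" using a la lb Fc by auto
    then have ar: "(zpre @ a, ?lv a) \<notin> L (length a)" "length a < T" using Rc by auto
    have "(zpre @ butlast b, ?lv (butlast b)) \<in> L (length b - 1)"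
      using inv_C[OF run lb(2) lb(1) lb(3)] by blast
    then have "(zpre @ take (length a) (butlast b), ?lv (take (length a) (butlast b))) \<in> L (length a)"
      using L_prefix_closed[OF run, of "length b - 1" "length a" "butlast b"] la lb by auto
    moreover have "take (length a) (butlast b) = a"
      using sp la by (auto simp: take_butlast prefix_def dest!: prefix_order.less_imp_le)
    ultimately show False using ar by simp
  qed
  have fr: "frontier S zpre T (F \<union> R)"
    unfolding frontier_def
  proof (intro conjI)
    show "\<forall>a\<in>F \<union> R. is_node S zpre a \<and> length a \<le> T" using Fc Rc by auto
  next
    show "\<forall>a\<in>F \<union> R. \<forall>b\<in>F \<union> R. \<not> strict_prefix a b" using nsp by blast
  next
    show "\<forall>w. is_node S zpre w \<and> length w = T \<longrightarrow> (\<exists>!a. a \<in> F \<union> R \<and> prefix a w)"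
    proof (intro allI impI)
    fix w assume w: "is_node S zpre w \<and> length w = T"
    define M where "M = {s. s < T \<and> (zpre @ take s w, ?lv (take s w)) \<in> L s}"
    have finM: "finite M" unfolding M_def by auto
    have "0 \<in> M" unfolding M_def using T run_facts(1)[OF run] by auto
    define t where "t = Max M"
    have tM: "t \<in> M" unfolding t_def using finM \<open>0 \<in> M\<close> Max_in by blast
    have tmax: "s \<in> M \<Longrightarrow> s \<le> t" for s unfolding t_def using finM by simp
    have tT: "t < T" and tL: "(zpre @ take t w, ?lv (take t w)) \<in> L t" using tM M_def by auto
    have wt: "w ! t \<in> S (zpre @ take t w)" using w tT unfolding is_node_def by auto
    have y: "take (Suc t) w = take t w @ [w ! t]" using w tT by (simp add: take_Suc_conv_app_nth)
    have yC: "(zpre @ take (Suc t) w, ?lv (take (Suc t) w)) \<in> C (Suc t)"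
      unfolding y by (rule inv_C_intro[OF run tT tL wt])
    have ex: "\<exists>a. a \<in> F \<union> R \<and> prefix a w"
    proof (cases "Suc t = T")
      case True
      then have "take (Suc t) w = w" using w by simp
      then have "w \<in> F" using Fc w yC True by auto
      then show ?thesis by blast
    next
      case False
      then have "Suc t < T" using tT by simp
      moreover have "Suc t \<notin> M" using tmax by fastforce
      ultimately have "take (Suc t) w \<in> R"
        using Rc yC w tT node_take[of S zpre w "Suc t"] unfolding M_def by auto
      then show ?thesis by (meson UnI2 take_is_prefix)
    qed
    show "\<exists>!a. a \<in> F \<union> R \<and> prefix a w"
    proof (rule ex_ex1I[OF ex])
      fix a b assume "a \<in> F \<union> R \<and> prefix a w" "b \<in> F \<union> R \<and> prefix b w"
      then show "a = b" using nsp prefix_same_cases by (metis prefix_order.le_neq_trans)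
    qed
    qed
  qed
  have finF: "finite (F \<union> R)"
    by (rule finite_subset[OF _ finite_lists_length_le[of "UNIV::'v set" T]])
       (use fr in \<open>auto simp: frontier_def\<close>)
  have disj: "F \<inter> R = {}" using Fc Rc by auto
  have "(\<Sum>x\<in>F. seq_prob P S zpre x) + (\<Sum>u\<in>R. seq_prob P S zpre u) = (\<Sum>x\<in>F \<union> R. seq_prob P S zpre x)"
    using finF disj by (simp add: sum.union_disjoint)
  also have "\<dots> = 1" using part1 fr by blast
  finally have "(\<Sum>x\<in>F. seq_prob P S zpre x) + (\<Sum>u\<in>R. seq_prob P S zpre u) = 1" .
  then show ?thesis using part1 fr unfolding F_def R_def Let_def by blast
qed

end
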